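(* Let $D$ be a consistent domain, let $(M,s)$ be a state, let $a$ be a world-altering action that is executable in $(M,s)$, and let $\Phi^w_D(a,(M,s))=\{(M',s')\}$. Then: (1) for every world $r(a,u)\in M'[S]\setminus M[S]$ and every literal $\ell\in e_D(a,M,u)$, we have $(M',r(a,u))\models \ell$; (2) for every world $r(a,u)\in M'[S]\setminus M[S]$ and every fluent $f\in\mathcal F$ such that neither $f$ nor $\neg f$ belongs to $e_D(a,M,u)$, we have $(M,u)\models f$ iff $(M',r(a,u))\models f$; (3) for every agent $i\in O_D(a,M,s)$ and every belief formula $\varphi$, $(M',s')\models \mathbf B_i\varphi$ iff $(M,s)\models\mathbf B_i\varphi$.
   Context: Fix a finite set of agents $\mathcal{AG}=\{1,\dots,n\}$, a set $\mathcal F$ of fluents (propositional variables) and a set of actions. Fluent formulae are propositional formulae over $\mathcal F$; a fluent literal is $f$ or $\neg f$ for $f\in\mathcal F$. Belief formulae are built from fluent formulae using $\mathbf B_i\varphi$ ($i\in\mathcal{AG}$), the Boolean connectives, and $\mathbf E_\alpha\varphi$, $\mathbf C_\alpha\varphi$ for nonempty $\alpha\subseteq\mathcal{AG}$. A Kripke structure $M=\langle S,\pi,\mathcal B_1,\dots,\mathcal B_n\rangle$ has a set of worlds $M[S]=S$, an interpretation $M[\pi](u)\subseteq\mathcal F$ of each world, and relations $M[i]=\mathcal B_i\subseteq S\times S$. A state is a pair $(M,s)$ with $s\in M[S]$. Satisfaction: $(M,s)\models\varphi$ for a fluent formula iff $M[\pi](s)\models\varphi$; $(M,s)\models\mathbf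 B_i\varphi$ iff $(M,t)\models\varphi$ for all $t$ with $(s,t)\in M[i]$; Boolean connectives as usual; $\mathbf E_\alpha\varphi$ holds iff $\mathbf B_i\varphi$ holds for all $i\in\alpha$; $\mathbf C_\alpha\varphi$ holds iff $\mathbf E^k_\alpha\varphi$ holds for all $k\ge0$, where $\mathbf E^0_\alpha\varphi=\varphi$, $\mathbf E^{k+1}_\alpha\varphi=\mathbf E_\alpha\mathbf E^k_\alpha\varphi$. A domain $D$ consists of: for each action $a$ exactly one statement "executable $a$ if $\psi$" ($\psi$ a belief formula; $a$ is executable in $(M,s)$ iff $(M,s)\models\psi$); for world-altering actions, statements "$a$ causes $\ell$ if $\varphi$" ($\ell$ a fluent literal, $\varphi$ a belief formula); and observability statements "$X$ observes $a$ if $\varphi$" and "$X$ aware\_of $a$ if $\varphi$" ($X$ an agent, $\varphi$ a fluent formula). $F_D(a,M,s)$ is the set of agents $X$ with some statement "$X$ observes $a$ if $\varphi$" in $D$ and $(M,s)\models\varphi$; $P_D(a,M,s)$ is defined likewise with "aware\_of"; $O_D(a,M,s)=\mathcal{AG}\setminus(F_D(a,M,s)\cup P_D(a,M,s))$. For a world-altering action $a$ and $u\in M[S]$, $e_D(a,M,u)=\{\ell\mid$ "$a$ causes $\ell$ if $\varphi$" $\in D$ and $(M,u)\models\varphi\}$. $D$ is consistent if $F_D(a,M,s)\cap P_D(a,M,s)=\emptyset$ always and every $e_D(a,M,u)$ is a consistent set of literals. Transition $\Phi^w_D$: if $a$ is executable in $(M,s)$, $\Phi^w_D(a,(M,s))=\{(M',s')\}$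 where: for every $u\in M[S]$ such that $a$ is executable in $(M,u)$ a fresh world $r(a,u)$ is created whose interpretation is obtained from $M[\pi](u)$ by making every literal of $e_D(a,M,u)$ true and leaving all other fluents unchanged; $M'[S]=M[S]\cup\{r(a,u)\}$; worlds of $M[S]$ keep their interpretations; $M'[i]$ contains $M[i]$; for $i\in F_D(a,M,s)$, $M'[i]$ additionally contains $(r(a,u),r(a,v))$ whenever $(u,v)\in M[i]$ and both $r(a,u),r(a,v)$ exist; for $i\in O_D(a,M,s)$, $M'[i]$ additionally contains $(r(a,u),v)$ whenever $r(a,u)$ exists and $(u,v)\in M[i]$; no other pairs; and $s'=r(a,s)$. *)

theory Defs
  imports Main
begin

datatype 'f fform =
    FVar 'f
  | FTrue
  | FFalse
  | FNot "'f fform"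
  | FAnd "'f fform" "'f fform"
  | FOr "'f fform" "'f fform"
  | FImp "'f fform" "'f fform"

datatype 'f lit = Pos 'f | Neg 'f

datatype ('ag, 'f) bform =
    Fl "'f fform"
  | Bel 'ag "('ag, 'f) bform"
  | BNot "('ag, 'f) bform"
  | BAnd "('ag, 'f) bform" "('ag, 'f) bform"
  | BOr "('ag, 'f) bform" "('ag, 'f) bform"
  | BImp "('ag, 'f) bform" "('ag, 'f) bform"
  | Eall "'ag set" "('ag, 'f) bform"
  | Ccom "'ag set" "('ag, 'f) bform"

fun wf_bform :: "('ag, 'f) bform \<Rightarrow> bool" where
  "wf_bform (Fl _) = True"
| "wf_bform (Bel _ p) = wf_bform p"
| "wf_bform (BNot p) = wf_bform p"
| "wf_bform (BAnd p q) = (wf_bform p \<and> wf_bform q)"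
| "wf_bform (BOr p q) = (wf_bform p \<and> wf_bform q)"
| "wf_bform (BImp p q) = (wf_bform p \<and> wf_bform q)"
| "wf_bform (Eall A p) = (A \<noteq> {} \<and> wf_bform p)"
| "wf_bform (Ccom A p) = (A \<noteq> {} \<and> wf_bform p)"

record ('w, 'ag, 'f) kripke =
  worlds :: "'w set"
  interp :: "'w \<Rightarrow> 'f set"
  rel :: "'ag \<Rightarrow> ('w \<times> 'w) set"

definition wf_kripke :: "('w, 'ag, 'f) kripke \<Rightarrow> bool" where
  "wf_kripke M \<longleftrightarrow> (\<forall>i. rel M i \<subseteq> worlds M \<times> worlds M)"

fun fsat :: "'f set \<Rightarrow> 'f fform \<Rightarrow> bool" where
  "fsat I (FVar f) = (f \<in> I)"
| "fsat I FTrue = True"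
| "fsat I FFalse = False"
| "fsat I (FNot p) = (\<not> fsat I p)"
| "fsat I (FAnd p q) = (fsat I p \<and> fsat I q)"
| "fsat I (FOr p q) = (fsat I p \<or> fsat I q)"
| "fsat I (FImp p q) = (fsat I p \<longrightarrow> fsat I q)"

text \<open>E^k_alpha applied to a semantic predicate: satEk M A k P w holds iff
  (M,w) satisfies E^k_A of a formula whose extension is P.\<close>
fun satEk :: "('w, 'ag, 'f) kripke \<Rightarrow> 'ag set \<Rightarrow> nat \<Rightarrow> ('w \<Rightarrow> bool) \<Rightarrow> 'w \<Rightarrow> bool" where
  "satEk M A 0 P w = P w"
| "satEk M A (Suc k) P w = (\<forall>i\<in>A. \<forall>v. (w, v) \<in> rel M i \<longrightarrow> satEk M A k P v)"

fun sat :: "('w, 'ag, 'f) kripke \<Rightarrow> 'w \<Rightarrow> ('ag, 'f) bform \<Rightarrow> bool" where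
  "sat M w (Fl p) = fsat (interp M w) p"
| "sat M w (Bel i p) = (\<forall>v. (w, v) \<in> rel M i \<longrightarrow> sat M v p)"
| "sat M w (BNot p) = (\<not> sat M w p)"
| "sat M w (BAnd p q) = (sat M w p \<and> sat M w q)"
| "sat M w (BOr p q) = (sat M w p \<or> sat M w q)"
| "sat M w (BImp p q) = (sat M w p \<longrightarrow> sat M w q)"
| "sat M w (Eall A p) = (\<forall>i\<in>A. \<forall>v. (w, v) \<in> rel M i \<longrightarrow> sat M v p)"
| "sat M w (Ccom A p) = (\<forall>k. satEk M A k (\<lambda>v. sat M v p) w)"

fun lsat :: "('w, 'ag, 'f) kripke \<Rightarrow> 'w \<Rightarrow> 'f lit \<Rightarrow> bool" where
  "lsat M w (Pos f) = (f \<in> interp M w)"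
| "lsat M w (Neg f) = (f \<notin> interp M w)"

text \<open>A domain: exactly one executability condition per action, a set of
  world-altering actions, causal laws (a causes l if phi), and observability
  statements (X observes a if phi), (X aware_of a if phi).\<close>
record ('act, 'ag, 'f) domain =
  exec_cond :: "'act \<Rightarrow> ('ag, 'f) bform"
  world_altering :: "'act set"
  causes :: "('act \<times> 'f lit \<times> ('ag, 'f) bform) set"
  observes :: "('act \<times> 'ag \<times> 'f fform) set"
  aware_of :: "('act \<times> 'ag \<times> 'f fform) set"

definition executable :: "('act, 'ag, 'f) domain \<Rightarrow> 'act \<Rightarrow> ('w, 'ag, 'f) kripke \<Rightarrow> 'w \<Rightarrow> bool" where
  "executable D a M s \<longleftrightarrow> sat M s (exec_cond D a)"

definition F_D :: "('act, 'ag, 'f) domain \<Rightarrow> 'act \<Rightarrow> ('w, 'ag, 'f) kripke \<Rightarrow> 'w \<Rightarrow> 'ag set" where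
  "F_D D a M s = {X. \<exists>\<phi>. (a, X, \<phi>) \<in> observes D \<and> sat M s (Fl \<phi>)}"

definition P_D :: "('act, 'ag, 'f) domain \<Rightarrow> 'act \<Rightarrow> ('w, 'ag, 'f) kripke \<Rightarrow> 'w \<Rightarrow> 'ag set" where
  "P_D D a M s = {X. \<exists>\<phi>. (a, X, \<phi>) \<in> aware_of D \<and> sat M s (Fl \<phi>)}"

text \<open>The agent set AG is the whole (finite) type 'ag.\<close>
definition O_D :: "('act, 'ag, 'f) domain \<Rightarrow> 'act \<Rightarrow> ('w, 'ag, 'f) kripke \<Rightarrow> 'w \<Rightarrow> 'ag set" where
  "O_D D a M s = UNIV - (F_D D a M s \<union> P_D D a M s)"

definition e_D :: "('act, 'ag, 'f) domain \<Rightarrow> 'act \<Rightarrow> ('w, 'ag, 'f) kripke \<Rightarrow> 'w \<Rightarrow> 'f lit set" where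
  "e_D D a M u = {l. \<exists>\<phi>. (a, l, \<phi>) \<in> causes D \<and> sat M u \<phi>}"

definition consistent_lits :: "'f lit set \<Rightarrow> bool" where
  "consistent_lits L \<longleftrightarrow> (\<forall>f. \<not> (Pos f \<in> L \<and> Neg f \<in> L))"

text \<open>Consistency of a domain, quantified over all (well-formed) Kripke
  structures whose worlds have type 'w.\<close>
definition consistent_domain :: "('act, 'ag, 'f) domain \<Rightarrow> 'w itself \<Rightarrow> bool" where
  "consistent_domain D (_ :: 'w itself) \<longleftrightarrow>
     (\<forall>a (M :: ('w, 'ag, 'f) kripke). wf_kripke M \<longrightarrow>
        (\<forall>s \<in> worlds M. F_D D a M s \<inter> P_D D a M s = {}) \<and>
        (\<forall>u \<in> worlds M. consistent_lits (e_D D a M u)))"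

definition update_interp :: "'f lit set \<Rightarrow> 'f set \<Rightarrow> 'f set" where
  "update_interp L I = (I - {f. Neg f \<in> L}) \<union> {f. Pos f \<in> L}"

text \<open>Fresh world names: r a u is the fresh world r(a,u). The naming function is
  required to be injective on M[S] and to avoid M[S].\<close>
definition fresh_naming :: "('act \<Rightarrow> 'w \<Rightarrow> 'w) \<Rightarrow> 'act \<Rightarrow> ('w, 'ag, 'f) kripke \<Rightarrow> bool" where
  "fresh_naming r a M \<longleftrightarrow> inj_on (r a) (worlds M) \<and> r a ` worlds M \<inter> worlds M = {}"

definition Phi_w :: "('act, 'ag, 'f) domain \<Rightarrow> 'act \<Rightarrow> ('w, 'ag, 'f) kripke \<Rightarrow> 'w
    \<Rightarrow> ('act \<Rightarrow> 'w \<Rightarrow> 'w) \<Rightarrow> ('w, 'ag, 'f) kripke \<times> 'w" where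
  "Phi_w D a M s r =
    (let X = {u \<in> worlds M. executable D a M u};
         orig = (\<lambda>w. THE u. u \<in> X \<and> r a u = w)
     in (\<lparr> worlds = worlds M \<union> r a ` X,
           interp = (\<lambda>w. if w \<in> r a ` X
                         then update_interp (e_D D a M (orig w)) (interp M (orig w))
                         else interp M w),
           rel = (\<lambda>i. rel M i
                    \<union> (if i \<in> F_D D a M s
                       then {(r a u, r a v) | u v. (u, v) \<in> rel M i \<and> u \<in> X \<and> v \<in> X}
                       else {})
                    \<union> (if i \<in> O_D D a M s
                       then {(r a u, v) | u v. (u, v) \<in> rel M i \<and> u \<in> X}
                       else {})) \<rparr>,
         r a s))"

end

theory Submission
  imports Defs
begin

lemma satEk_agree:
  assumes I: "\<And>w v i. w \<in> W \<Longrightarrow> (w, v) \<in> rel M' i \<longleftrightarrow> (w, v) \<in> rel M i"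
    and C: "\<And>w v i. (w, v) \<in> rel M i \<Longrightarrow> v \<in> W"
    and P: "\<And>w. w \<in> W \<Longrightarrow> P' w = P w"
  shows "w \<in> W \<Longrightarrow> satEk M' A k P' w = satEk M A k P w"
proof (induction k arbitrary: w)
  case 0 then show ?case using P by simp
next
  case (Suc k)
  show ?case using Suc I C by (auto; blast)
qed

lemma sat_agree:
  assumes I: "\<And>w v i. w \<in> W \<Longrightarrow> (w, v) \<in> rel M' i \<longleftrightarrow> (w, v) \<in> rel M i"
    and C: "\<And>w v i. (w, v) \<in> rel M i \<Longrightarrow> v \<in> W"
    and T: "\<And>w. w \<in> W \<Longrightarrow> interp M' w = interp M w"
  shows "w \<in> W \<Longrightarrow> sat M' w \<phi> = sat M w \<phi>"
proof (induction \<phi> arbitrary: w)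
  case (Ccom A p)
  have "\<And>k. satEk M' A k (\<lambda>v. sat M' v p) w = satEk M A k (\<lambda>v. sat M v p) w"
    by (rule satEk_agree[OF I C]) (use Ccom in auto)
  then show ?case by simp
qed (use I C T in \<open>auto; blast\<close>)+

theorem proposition2:
  fixes D :: "('act, 'ag :: finite, 'f) domain"
    and M M' :: "('w, 'ag, 'f) kripke"
    and s s' :: 'w
    and a :: 'act
    and r :: "'act \<Rightarrow> 'w \<Rightarrow> 'w"
  assumes "consistent_domain D TYPE('w)"
    and "wf_kripke M"
    and "s \<in> worlds M"
    and "a \<in> world_altering D"
    and "executable D a M s"
    and "fresh_naming r a M"
    and "Phi_w D a M s r = (M', s')"
  shows "(\<forall>u \<in> worlds M. r a u \<in> worlds M' - worlds M \<longrightarrow>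
            (\<forall>l \<in> e_D D a M u. lsat M' (r a u) l))
       \<and> (\<forall>u \<in> worlds M. r a u \<in> worlds M' - worlds M \<longrightarrow>
            (\<forall>f. Pos f \<notin> e_D D a M u \<and> Neg f \<notin> e_D D a M u \<longrightarrow>
               (sat M u (Fl (FVar f)) \<longleftrightarrow> sat M' (r a u) (Fl (FVar f)))))
       \<and> (\<forall>i \<in> O_D D a M s. \<forall>\<phi>. wf_bform \<phi> \<longrightarrow>
            (sat M' s' (Bel i \<phi>) \<longleftrightarrow> sat M s (Bel i \<phi>)))"
proof -
  define X where "X = {u \<in> worlds M. executable D a M u}"
  define orig where "orig = (\<lambda>w. THE u. u \<in> X \<and> r a u = w)"
  have inj: "inj_on (r a) (worlds M)" and fr: "r a ` worlds M \<inter> worlds M = {}"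
    using assms(6) unfolding fresh_naming_def by auto
  have XW: "X \<subseteq> worlds M" unfolding X_def by auto
  have M': "M' = \<lparr> worlds = worlds M \<union> r a ` X,
           interp = (\<lambda>w. if w \<in> r a ` X
                         then update_interp (e_D D a M (orig w)) (interp M (orig w))
                         else interp M w),
           rel = (\<lambda>i. rel M i
                    \<union> (if i \<in> F_D D a M s
                       then {(r a u, r a v) | u v. (u, v) \<in> rel M i \<and> u \<in> X \<and> v \<in> X}
                       else {})
                    \<union> (if i \<in> O_D D a M s
                       then {(r a u, v) | u v. (u, v) \<in> rel M i \<and> u \<in> X}
                       else {})) \<rparr>" and s': "s' = r a s"
    using assms(7) unfolding Phi_w_def X_def orig_def Let_def by auto
  have origu: "orig (r a u) = u" if "u \<in> X" for u
    unfolding orig_def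
    by (rule the_equality) (use that inj XW in \<open>auto dest: inj_onD\<close>)
  have key: "u \<in> X \<and> interp M' (r a u) = update_interp (e_D D a M u) (interp M u)"
    if "u \<in> worlds M" "r a u \<in> worlds M' - worlds M" for u
  proof -
    from that obtain u' where u': "u' \<in> X" "r a u = r a u'" by (auto simp: M')
    then have "u = u'" using inj XW that(1) by (auto dest: inj_onD)
    with u' show ?thesis using origu by (auto simp: M')
  qed
  have cons: "consistent_lits (e_D D a M u)" if "u \<in> worlds M" for u
    using assms(1,2) that unfolding consistent_domain_def by blast
  have P1: "\<forall>u \<in> worlds M. r a u \<in> worlds M' - worlds M \<longrightarrow>
            (\<forall>l \<in> e_D D a M u. lsat M' (r a u) l)"
  proof (intro ballI impI)
    fix u l assume u: "u \<in> worlds M" "r a u \<in> worlds M' - worlds M" and l: "l \<in> e_D D a M u"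
    show "lsat M' (r a u) l"
      using key[OF u] cons[OF u(1)] l
      by (cases l) (auto simp: update_interp_def consistent_lits_def)
  qed
  have P2: "\<forall>u \<in> worlds M. r a u \<in> worlds M' - worlds M \<longrightarrow>
            (\<forall>f. Pos f \<notin> e_D D a M u \<and> Neg f \<notin> e_D D a M u \<longrightarrow>
               (sat M u (Fl (FVar f)) \<longleftrightarrow> sat M' (r a u) (Fl (FVar f))))"
    using key by (auto simp: update_interp_def)
  have relW: "\<And>w v i. (w, v) \<in> rel M i \<Longrightarrow> w \<in> worlds M \<and> v \<in> worlds M"
    using assms(2) unfolding wf_kripke_def by blast
  have freshX: "\<And>u. u \<in> X \<Longrightarrow> r a u \<notin> worlds M" using fr XW by blast
  have agree: "sat M' w \<phi> = sat M w \<phi>" if "w \<in> worlds M" for w \<phi>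
  proof (rule sat_agree[where W = "worlds M"])
    show "(w, v) \<in> rel M' i \<longleftrightarrow> (w, v) \<in> rel M i" if "w \<in> worlds M" for w v i
      using that freshX by (auto simp: M')
    show "\<And>w v i. (w, v) \<in> rel M i \<Longrightarrow> v \<in> worlds M" using relW by blast
    show "interp M' w = interp M w" if "w \<in> worlds M" for w
      using that freshX by (auto simp: M')
  qed (use that in auto)
  have sX: "s \<in> X" using assms(3,5) by (simp add: X_def)
  have P3: "\<forall>i \<in> O_D D a M s. \<forall>\<phi>. wf_bform \<phi> \<longrightarrow>
            (sat M' s' (Bel i \<phi>) \<longleftrightarrow> sat M s (Bel i \<phi>))"
  proof (intro ballI allI impI)
    fix i \<phi> assume i: "i \<in> O_D D a M s"
    have nF: "i \<notin> F_D D a M s" using i by (simp add: O_D_def)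
    have succ: "(r a s, v) \<in> rel M' i \<longleftrightarrow> (s, v) \<in> rel M i" for v
    proof
      assume h: "(r a s, v) \<in> rel M' i"
      have "(r a s, v) \<notin> rel M i" using relW freshX sX by blast
      with h nF i obtain u where "(u, v) \<in> rel M i" "u \<in> X" "r a u = r a s"
        by (auto simp: M')
      moreover have "u = s" using calculation inj XW sX by (auto dest: inj_onD)
      ultimately show "(s, v) \<in> rel M i" by simp
    next
      assume "(s, v) \<in> rel M i"
      then show "(r a s, v) \<in> rel M' i" using i sX by (auto simp: M')
    qed
    show "sat M' s' (Bel i \<phi>) \<longleftrightarrow> sat M s (Bel i \<phi>)"
      using succ agree relW by (auto simp: s')
  qed
  show ?thesis using P1 P2 P3 by blast
qed

end
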